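(* For the population protocol USD and every $t\ge1$: (1) $\mathbb E_{t-1}[\gamma_t]=\gamma_{t-1}+\frac2n\big((1-2\beta_{t-1})\gamma_{t-1}+\|\alpha_{t-1}\|_3^3\big)+\frac{\beta_{t-1}-\gamma_{t-1}}{n^2}$. (2) $\mathrm{Var}_{t-1}[\gamma_t]\le\frac{9\|\alpha_{t-1}\|_3^3}{n^2}$. (3) Conditioned on $\mathcal F_{t-1}$, $\gamma_t-\mathbb E_{t-1}[\gamma_t]$ satisfies the $\big(\frac{8\alpha^{\max}_{t-1}}{n},\frac{9\|\alpha_{t-1}\|_3^3}{n^2}\big)$-Bernstein condition.
   Context: Vertex set $V$, $|V|=n$; opinions in $\Sigma=[k]\cup\{\bot\}$ ($\bot$ = undecided). USD update rule: $\mathsf{update}(\sigma_1,\sigma_2)=\bot$ if $\sigma_1,\sigma_2\in[k]$ and $\sigma_1\ne\sigma_2$; $=\sigma_2$ if $\sigma_1=\bot$; $=\sigma_1$ otherwise. Population protocol USD: given $\mathrm{opn}_t\in\Sigma^V$, an ordered pair $(u,v)$ is chosen uniformly from $V\times V$ (with replacement), $\mathrm{opn}_{t+1}(u)=\mathsf{update}(\mathrm{opn}_t(u),\mathrm{opn}_t(v))$, and all other vertices keep their opinions. Notation: $\alpha_t(i)=|\{u:\mathrm{opn}_t(u)=i\}|/n$, $\beta_t=\sum_{i\in[k]}\alpha_t(i)$, $\gamma_t=\sum_{i\in[k]}\alpha_t(i)^2$, $\|\alpha_t\|_3^3=\sum_{i\in[k]}\alpha_t(i)^3$, $\alpha^{\max}_t=\max_{i\in[k]}\alpha_t(i)$.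 $(\mathcal F_t)$ is the natural filtration; $\mathbb E_{t-1},\mathrm{Var}_{t-1}$ are conditional on $\mathcal F_{t-1}$. Bernstein condition: for $D,s\ge0$, $X$ satisfies the $(D,s)$-Bernstein condition if $\mathbb E[e^{\lambda X}]\le\exp\!\big(\frac{\lambda^2 s/2}{1-|\lambda|D/3}\big)$ for all real $\lambda$ with $|\lambda|D<3$. Conditioned on $\mathcal F_{t-1}$: the same with $\mathbb E_{t-1}$, almost surely. *)

theory Defs
  imports "HOL-Probability.Probability"
begin

text \<open>Opinions: \<open>Some i\<close> with \<open>i \<in> {1..k}\<close> is opinion i, \<open>None\<close> is undecided (bot).\<close>

definition usd_update :: "nat option \<Rightarrow> nat option \<Rightarrow> nat option" where
  "usd_update s1 s2 =
     (if s1 \<noteq> None \<and> s2 \<noteq> None \<and> s1 \<noteq> s2 then None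
      else if s1 = None then s2 else s1)"

definition usd_step :: "('v \<Rightarrow> nat option) \<Rightarrow> 'v \<times> 'v \<Rightarrow> ('v \<Rightarrow> nat option)" where
  "usd_step x p = x(fst p := usd_update (x (fst p)) (x (snd p)))"

text \<open>Distribution of the next configuration given the current one (conditioning on F_{t-1}).\<close>
definition usd_next :: "'v set \<Rightarrow> ('v \<Rightarrow> nat option) \<Rightarrow> ('v \<Rightarrow> nat option) pmf" where
  "usd_next V x = map_pmf (usd_step x) (pmf_of_set (V \<times> V))"

definition valid_config :: "'v set \<Rightarrow> nat \<Rightarrow> ('v \<Rightarrow> nat option) \<Rightarrow> bool" where
  "valid_config V k x \<longleftrightarrow> (\<forall>u\<in>V. x u = None \<or> (\<exists>i\<in>{1..k}. x u = Some i))"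

definition alpha :: "'v set \<Rightarrow> ('v \<Rightarrow> nat option) \<Rightarrow> nat \<Rightarrow> real" where
  "alpha V x i = real (card {u\<in>V. x u = Some i}) / real (card V)"

definition beta :: "'v set \<Rightarrow> nat \<Rightarrow> ('v \<Rightarrow> nat option) \<Rightarrow> real" where
  "beta V k x = (\<Sum>i\<in>{1..k}. alpha V x i)"

definition gamma :: "'v set \<Rightarrow> nat \<Rightarrow> ('v \<Rightarrow> nat option) \<Rightarrow> real" where
  "gamma V k x = (\<Sum>i\<in>{1..k}. (alpha V x i)^2)"

definition norm3_cubed :: "'v set \<Rightarrow> nat \<Rightarrow> ('v \<Rightarrow> nat option) \<Rightarrow> real" where
  "norm3_cubed V k x = (\<Sum>i\<in>{1..k}. (alpha V x i)^3)"

definition alpha_max :: "'v set \<Rightarrow> nat \<Rightarrow> ('v \<Rightarrow> nat option) \<Rightarrow> real" where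
  "alpha_max V k x = Max ((alpha V x) ` {1..k})"

definition bernstein_cond :: "'a measure \<Rightarrow> ('a \<Rightarrow> real) \<Rightarrow> real \<Rightarrow> real \<Rightarrow> bool" where
  "bernstein_cond M X D s \<longleftrightarrow>
     (\<forall>l::real. \<bar>l\<bar> * D < 3 \<longrightarrow>
        (\<integral>\<omega>. exp (l * X \<omega>) \<partial>M) \<le> exp ((l^2 * s / 2) / (1 - \<bar>l\<bar> * D / 3)))"

end

theory Submission
  imports Defs
begin

lemma E_sum:
  assumes "finite V" "V \<noteq> {}"
  shows "(\<integral>y. f y \<partial>(measure_pmf (usd_next V x))) = (\<Sum>p\<in>V\<times>V. f (usd_step x p)) / (real (card V))^2"
proof -
  have "V \<times> V \<noteq> {}" "finite (V \<times> V)" using assms by auto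
  then show ?thesis unfolding usd_next_def
    by (simp add: integral_pmf_of_set card_cartesian_product power2_eq_square)
qed

lemma group_opn:
  fixes \<phi> :: "nat option \<Rightarrow> real"
  assumes "finite V" "valid_config V k x"
  shows "(\<Sum>u\<in>V. \<phi> (x u)) = real (card {u\<in>V. x u = None}) * \<phi> None
           + (\<Sum>i\<in>{1..k}. real (card {u\<in>V. x u = Some i}) * \<phi> (Some i))"
proof -
  have sub: "x ` V \<subseteq> insert None (Some ` {1..k})" using assms(2) unfolding valid_config_def by auto
  have "(\<Sum>u\<in>V. \<phi> (x u)) = (\<Sum>w\<in>insert None (Some ` {1..k}). \<Sum>u\<in>{u. u\<in>V \<and> x u = w}. \<phi> (x u))"
    using sum.group[OF assms(1) _ sub, of "\<lambda>u. \<phi> (x u)"] by simp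
  also have "\<dots> = (\<Sum>w\<in>insert None (Some ` {1..k}). real (card {u\<in>V. x u = w}) * \<phi> w)"
    by (rule sum.cong) auto
  also have "\<dots> = real (card {u\<in>V. x u = None}) * \<phi> None
           + (\<Sum>i\<in>{1..k}. real (card {u\<in>V. x u = Some i}) * \<phi> (Some i))"
    by (subst sum.insert) (auto simp: sum.reindex)
  finally show ?thesis .
qed


definition gg :: "real \<Rightarrow> (nat \<Rightarrow> real) \<Rightarrow> nat option \<Rightarrow> nat option \<Rightarrow> real" where
  "gg n a o1 o2 = (case o2 of None \<Rightarrow> 0 | Some j \<Rightarrow>
      (case o1 of None \<Rightarrow> 2 * a j / n + 1 / n^2
         | Some i \<Rightarrow> (if i = j then 0 else 1 / n^2 - 2 * a i / n)))"

lemma gamma_shift: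
  assumes "\<And>l. alpha V y l = alpha V x l + (if l = i then d else 0)" "i \<in> {1..k}"
  shows "gamma V k y = gamma V k x + (2 * alpha V x i * d + d^2)"
proof -
  have "gamma V k y = (\<Sum>l\<in>{1..k}. (alpha V x l)^2 + (if l = i then 2 * alpha V x i * d + d^2 else 0))"
    unfolding gamma_def assms(1) by (rule sum.cong) (auto simp: power2_eq_square algebra_simps)
  also have "\<dots> = gamma V k x + (2 * alpha V x i * d + d^2)"
    unfolding gamma_def sum.distrib using assms(2) by simp
  finally show ?thesis .
qed

lemma step_gamma:
  assumes "finite V" "valid_config V k x" "u \<in> V" "v \<in> V"
  shows "gamma V k (usd_step x (u, v)) = gamma V k x + gg (real (card V)) (alpha V x) (x u) (x v)"
proof (cases "x v")
  case None
  then have "usd_step x (u, v) = x" unfolding usd_step_def usd_update_def by auto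
  then show ?thesis using None by (simp add: gg_def)
next
  case (Some j)
  have j: "j \<in> {1..k}" using assms(2,4) Some unfolding valid_config_def by auto
  show ?thesis
  proof (cases "x u")
    case None
    have st: "usd_step x (u, v) = x(u := Some j)" unfolding usd_step_def usd_update_def using None Some by auto
    have "alpha V (x(u := Some j)) l = alpha V x l + (if l = j then 1 / real (card V) else 0)" for l
    proof (cases "l = j")
      case True
      have "{w\<in>V. (x(u := Some j)) w = Some l} = insert u {w\<in>V. x w = Some l}" using True assms(3) by auto
      moreover have "u \<notin> {w\<in>V. x w = Some l}" using None by auto
      ultimately show ?thesis using True assms(1) unfolding alpha_def by (simp add: add_divide_distrib)
    next
      case False
      have "{w\<in>V. (x(u := Some j)) w = Some l} = {w\<in>V. x w = Some l}" using False None by auto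
      then show ?thesis using False unfolding alpha_def by simp
    qed
    from gamma_shift[OF this j] show ?thesis unfolding st using None Some
      by (simp add: gg_def power2_eq_square)
  next
    case (Some i)
    show ?thesis
    proof (cases "i = j")
      case True
      then have "usd_step x (u, v) = x" unfolding usd_step_def usd_update_def using \<open>x u = Some i\<close> \<open>x v = Some j\<close> by auto
      then show ?thesis using True \<open>x u = Some i\<close> \<open>x v = Some j\<close> by (simp add: gg_def)
    next
      case False
      have i: "i \<in> {1..k}" using assms(2,3) Some unfolding valid_config_def by auto
      have st: "usd_step x (u, v) = x(u := None)" unfolding usd_step_def usd_update_def using False Some \<open>x v = Some j\<close> by auto
      have "alpha V (x(u := None)) l = alpha V x l + (if l = i then - (1 / real (card V)) else 0)" for l
      proof (cases "l = i")
        case True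
        have "{w\<in>V. (x(u := None)) w = Some l} = {w\<in>V. x w = Some l} - {u}" using True by auto
        moreover have "u \<in> {w\<in>V. x w = Some l}" using Some True assms(3) by auto
        moreover have "finite {w\<in>V. x w = Some l}" using assms(1) by auto
        ultimately have "card {w\<in>V. (x(u := None)) w = Some l} = card {w\<in>V. x w = Some l} - 1"
          by simp
        moreover have "card {w\<in>V. x w = Some l} \<ge> 1"
          using \<open>u \<in> {w\<in>V. x w = Some l}\<close> \<open>finite {w\<in>V. x w = Some l}\<close>
          by (metis One_nat_def Suc_leI card_gt_0_iff empty_iff)
        ultimately show ?thesis using True unfolding alpha_def by (simp add: of_nat_diff diff_divide_distrib)
      next
        case False
        have "{w\<in>V. (x(u := None)) w = Some l} = {w\<in>V. x w = Some l}" using False Some by auto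
        then show ?thesis using False unfolding alpha_def by simp
      qed
      from gamma_shift[OF this i] show ?thesis unfolding st using False Some \<open>x v = Some j\<close>
        by (simp add: gg_def power2_eq_square)
    qed
  qed
qed


lemma group2:
  fixes \<phi> :: "nat option \<Rightarrow> real"
  assumes "finite V" "V \<noteq> {}" "valid_config V k x"
  shows "(\<Sum>u\<in>V. \<phi> (x u)) = real (card V) * ((1 - beta V k x) * \<phi> None
           + (\<Sum>i\<in>{1..k}. alpha V x i * \<phi> (Some i)))"
proof -
  have n0: "real (card V) > 0" using assms by (simp add: card_gt_0_iff)
  have c: "real (card V) = real (card {u\<in>V. x u = None}) + (\<Sum>i\<in>{1..k}. real (card {u\<in>V. x u = Some i}))"
    using group_opn[OF assms(1,3), of "\<lambda>_. 1"] by simp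
  have b: "real (card V) * beta V k x = (\<Sum>i\<in>{1..k}. real (card {u\<in>V. x u = Some i}))"
    unfolding beta_def alpha_def sum_distrib_left using n0 by simp
  have "real (card V) * ((1 - beta V k x) * \<phi> None + (\<Sum>i\<in>{1..k}. alpha V x i * \<phi> (Some i)))
      = (real (card V) - real (card V) * beta V k x) * \<phi> None + (\<Sum>i\<in>{1..k}. real (card V) * alpha V x i * \<phi> (Some i))"
    by (simp add: algebra_simps sum_distrib_left)
  also have "\<dots> = real (card {u\<in>V. x u = None}) * \<phi> None
           + (\<Sum>i\<in>{1..k}. real (card {u\<in>V. x u = Some i}) * \<phi> (Some i))"
    using n0 c b unfolding alpha_def by simp
  finally show ?thesis using group_opn[OF assms(1,3)] by simp
qed

lemma pair_sum:
  fixes F :: "nat option \<Rightarrow> nat option \<Rightarrow> real"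
  assumes "finite V" "V \<noteq> {}" "valid_config V k x"
    and F1: "\<And>w. F w None = 0" and F2: "\<And>i j. F (Some i) (Some j) = (if i = j then 0 else h i)"
    and F3: "\<And>j. F None (Some j) = q j"
  shows "(\<Sum>p\<in>V\<times>V. F (x (fst p)) (x (snd p))) = (real (card V))^2 *
     ((1 - beta V k x) * (\<Sum>j\<in>{1..k}. alpha V x j * q j)
      + (\<Sum>i\<in>{1..k}. alpha V x i * (beta V k x - alpha V x i) * h i))"
proof -
  let ?n = "real (card V)" and ?B = "beta V k x" and ?a = "alpha V x"
  define \<psi> where "\<psi> w = (\<Sum>j\<in>{1..k}. ?a j * F w (Some j))" for w
  have inner: "(\<Sum>v\<in>V. F w (x v)) = ?n * \<psi> w" for w
    using group2[OF assms(1-3), of "F w"] F1 unfolding \<psi>_def by simp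
  have "(\<Sum>p\<in>V\<times>V. F (x (fst p)) (x (snd p))) = (\<Sum>u\<in>V. \<Sum>v\<in>V. F (x u) (x v))"
    by (simp add: sum.cartesian_product case_prod_beta)
  also have "\<dots> = (\<Sum>u\<in>V. ?n * \<psi> (x u))" by (simp add: inner)
  also have "\<dots> = ?n * ?n * ((1 - ?B) * \<psi> None + (\<Sum>i\<in>{1..k}. ?a i * \<psi> (Some i)))"
    using group2[OF assms(1-3), of "\<lambda>w. ?n * \<psi> w"] by (simp add: algebra_simps sum_distrib_left)
  also have "\<psi> None = (\<Sum>j\<in>{1..k}. ?a j * q j)" unfolding \<psi>_def F3 ..
  also have "(\<Sum>i\<in>{1..k}. ?a i * \<psi> (Some i)) = (\<Sum>i\<in>{1..k}. ?a i * (?B - ?a i) * h i)"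
  proof (rule sum.cong)
    fix i assume i: "i \<in> {1..k}"
    have "\<psi> (Some i) = (\<Sum>j\<in>{1..k}. ?a j * h i - (if i = j then ?a j * h i else 0))"
      unfolding \<psi>_def F2 by (rule sum.cong) auto
    also have "\<dots> = (?B - ?a i) * h i" using i
      by (simp add: sum_subtractf beta_def sum_distrib_left[symmetric] algebra_simps)
    finally show "?a i * \<psi> (Some i) = ?a i * (?B - ?a i) * h i" by simp
  qed simp
  finally show ?thesis by (simp add: power2_eq_square)
qed


lemma alpha_ge:
  assumes "finite V" "u \<in> V" "x u = Some j"
  shows "alpha V x j \<ge> 1 / real (card V)"
proof -
  have "card {w\<in>V. x w = Some j} \<ge> 1"
    using assms by (metis (mono_tags, lifting) One_nat_def Suc_leI card_gt_0_iff empty_iff finite_subset mem_Collect_eq subsetI)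
  then show ?thesis unfolding alpha_def by (simp add: divide_right_mono)
qed

lemma alpha_nonneg: "alpha V x j \<ge> 0" unfolding alpha_def by simp

lemma alpha_gap:
  assumes "finite V"
  shows "alpha V x j = 0 \<or> alpha V x j \<ge> 1 / real (card V)"
proof (cases "{w\<in>V. x w = Some j} = {}")
  case True then show ?thesis unfolding alpha_def by (simp only: True) simp
next
  case False
  then obtain u where "u \<in> V" "x u = Some j" by auto
  then show ?thesis using alpha_ge[OF assms] by blast
qed

lemma alpha_le_max:
  assumes "i \<in> {1..k}"
  shows "alpha V x i \<le> alpha_max V k x"
  unfolding alpha_max_def using assms by (intro Max_ge) auto

lemma abs_aux: "(0::real) \<le> e \<Longrightarrow> e \<le> t \<Longrightarrow> \<bar>2 * t + e\<bar> \<le> 3 * t \<and> \<bar>e - 2 * t\<bar> \<le> 3 * t"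
  by auto

lemma gg_bound:
  assumes "finite V" "V \<noteq> {}" "valid_config V k x" "u \<in> V" "v \<in> V" "k \<ge> 1"
  shows "\<bar>gg (real (card V)) (alpha V x) (x u) (x v)\<bar> \<le> 3 * alpha_max V k x / real (card V)"
proof -
  let ?n = "real (card V)"
  have n0: "?n > 0" using assms by (simp add: card_gt_0_iff)
  have am: "alpha_max V k x \<ge> 0"
    using alpha_le_max[of 1 k V x] alpha_nonneg[of V x 1] assms(6) by force
  show ?thesis
  proof (cases "x v")
    case None
    then show ?thesis using am n0 by (simp add: gg_def)
  next
    case (Some j)
    have j: "j \<in> {1..k}" using assms(3,5) Some unfolding valid_config_def by auto
    have aj: "alpha V x j \<ge> 1 / ?n" using alpha_ge[of V v x j] assms Some by blast
    have ajm: "alpha V x j \<le> alpha_max V k x" using alpha_le_max[OF j] .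
    show ?thesis
    proof (cases "x u")
      case None
      have "1 / ?n^2 \<le> alpha V x j / ?n" using divide_right_mono[OF aj, of ?n] n0 by (simp add: power2_eq_square)
      then have "\<bar>2 * alpha V x j / ?n + 1 / ?n^2\<bar> \<le> 3 * alpha V x j / ?n"
        using abs_aux[of "1 / ?n^2" "alpha V x j / ?n"] by simp
      also have "\<dots> \<le> 3 * alpha_max V k x / ?n" using ajm n0 by (simp add: divide_right_mono)
      finally show ?thesis using None Some by (simp add: gg_def)
    next
      case (Some i)
      have i: "i \<in> {1..k}" using assms(3,4) Some unfolding valid_config_def by auto
      have ai: "alpha V x i \<ge> 1 / ?n" using alpha_ge[of V u x i] assms Some by blast
      have aim: "alpha V x i \<le> alpha_max V k x" using alpha_le_max[OF i] .
      have "1 / ?n^2 \<le> alpha V x i / ?n" using divide_right_mono[OF ai, of ?n] n0 by (simp add: power2_eq_square)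
      then have "\<bar>1 / ?n^2 - 2 * alpha V x i / ?n\<bar> \<le> 3 * alpha V x i / ?n"
        using abs_aux[of "1 / ?n^2" "alpha V x i / ?n"] by simp
      also have "\<dots> \<le> 3 * alpha_max V k x / ?n" using aim n0 by (simp add: divide_right_mono)
      finally show ?thesis using Some \<open>x v = Some j\<close> am n0 by (simp add: gg_def)
    qed
  qed
qed


lemma fact_bound: "2 * 3 ^ n \<le> (fact (n + 2) :: nat)"
proof (induction n)
  case 0 then show ?case by simp
next
  case (Suc n)
  have e: "fact (Suc n + 2) = Suc (n + 2) * (fact (n + 2) :: nat)"
    using fact_Suc[of "n + 2", where 'a=nat] by (simp only: add_Suc of_nat_id)
  have "2 * 3 ^ Suc n = 3 * (2 * 3 ^ n :: nat)" by simp
  also have "\<dots> \<le> 3 * fact (n + 2)" using Suc by simp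
  also have "\<dots> \<le> Suc (n + 2) * fact (n + 2)" by (intro mult_le_mono1) simp
  finally show ?case using e by simp
qed

lemma exp_bern:
  fixes y :: real
  assumes "\<bar>y\<bar> < 3"
  shows "exp y \<le> 1 + y + y^2 / 2 / (1 - \<bar>y\<bar> / 3)"
proof -
  define f where "f n = inverse (fact (n + 2)) *\<^sub>R (y ^ (n + 2))" for n
  define g where "g n = y^2 / 2 * (\<bar>y\<bar> / 3) ^ n" for n
  have r: "norm (\<bar>y\<bar> / 3) < 1" using assms by simp
  have gs: "g sums (y^2 / 2 * (1 / (1 - \<bar>y\<bar> / 3)))"
    unfolding g_def by (rule sums_mult) (rule geometric_sums, use r in simp)
  have fg: "norm (f n) \<le> g n" for n
  proof -
    have "real (2 * 3 ^ n) \<le> real (fact (n + 2))" using fact_bound[of n] by (simp only: of_nat_le_iff)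
    then have F: "2 * 3 ^ n \<le> (fact (n + 2) :: real)" by (simp only: of_nat_fact) simp
    have "norm (f n) = \<bar>y\<bar>^2 * \<bar>y\<bar>^n / fact (n + 2)"
      unfolding f_def by (simp add: abs_mult power_abs power_add divide_inverse mult_ac power2_eq_square)
    also have "\<dots> \<le> \<bar>y\<bar>^2 * \<bar>y\<bar>^n / (2 * 3 ^ n)"
      by (rule divide_left_mono) (use F in auto)
    also have "\<dots> = g n" unfolding g_def by (simp add: power_divide)
    finally show ?thesis .
  qed
  have sf: "summable f" by (rule summable_comparison_test[OF _ sums_summable[OF gs]]) (use fg in auto)
  have "(\<Sum>n. f n) \<le> (\<Sum>n. g n)"
    by (rule suminf_le[OF _ sf sums_summable[OF gs]]) (use fg in \<open>auto intro: order_trans[OF abs_ge_self]\<close>)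
  also have "\<dots> = y^2 / 2 / (1 - \<bar>y\<bar> / 3)" using sums_unique[OF gs] by simp
  finally have "(\<Sum>n. f n) \<le> y^2 / 2 / (1 - \<bar>y\<bar> / 3)" .
  then show ?thesis using exp_first_two_terms[of y] unfolding f_def by simp
qed


lemma sq_dev:
  fixes D :: "'a \<Rightarrow> real"
  assumes "finite S"
  shows "(\<Sum>p\<in>S. (D p - m)^2) = (\<Sum>p\<in>S. (D p)^2) - 2 * m * (\<Sum>p\<in>S. D p) + real (card S) * m^2"
proof -
  have "(\<Sum>p\<in>S. (D p - m)^2) = (\<Sum>p\<in>S. (D p)^2 - (2 * m) * D p + m^2)"
    by (rule sum.cong) (simp_all add: power2_eq_square algebra_simps)
  also have "\<dots> = (\<Sum>p\<in>S. (D p)^2) - (\<Sum>p\<in>S. (2 * m) * D p) + (\<Sum>p\<in>S. m^2)"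
    by (simp add: sum.distrib sum_subtractf)
  also have "\<dots> = (\<Sum>p\<in>S. (D p)^2) - 2 * m * (\<Sum>p\<in>S. D p) + real (card S) * m^2"
    by (simp add: sum_distrib_left[symmetric])
  finally show ?thesis .
qed

theorem mainTheorem13:
  fixes V :: "'v set" and k :: nat and x :: "'v \<Rightarrow> nat option"
  assumes "finite V" and "V \<noteq> {}" and "k \<ge> 1"
    and "valid_config V k x"
  defines "n \<equiv> real (card V)"
    and "M \<equiv> measure_pmf (usd_next V x)"
  shows "((\<integral>y. gamma V k y \<partial>M) =
           gamma V k x + 2 / n * ((1 - 2 * beta V k x) * gamma V k x + norm3_cubed V k x)
           + (beta V k x - gamma V k x) / n^2)
         \<and> measure_pmf.variance (usd_next V x) (gamma V k) \<le> 9 * norm3_cubed V k x / n^2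
         \<and> bernstein_cond M (\<lambda>y. gamma V k y - (\<integral>z. gamma V k z \<partial>M))
           (8 * alpha_max V k x / n) (9 * norm3_cubed V k x / n^2)"
proof -
  let ?a = "alpha V x" and ?B = "beta V k x" and ?G = "gamma V k x" and ?C = "norm3_cubed V k x"
  let ?S = "V \<times> V"
  have n0: "n > 0" unfolding n_def using assms(1,2) by (simp add: card_gt_0_iff)
  have cS: "real (card ?S) = n^2" unfolding n_def by (simp add: card_cartesian_product power2_eq_square)
  have fS: "finite ?S" using assms(1) by simp
  define h where "h i = 1 / n^2 - 2 * ?a i / n" for i
  define q where "q j = 2 * ?a j / n + 1 / n^2" for j
  define D where "D p = gg n ?a (x (fst p)) (x (snd p))" for p
  have hZ: "gamma V k (usd_step x p) = ?G + D p" if "p \<in> ?S" for p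
    using step_gamma[OF assms(1,4), of "fst p" "snd p"] that unfolding D_def n_def by auto
  have sumD: "(\<Sum>p\<in>?S. D p) = n^2 * ((1 - ?B) * (\<Sum>j\<in>{1..k}. ?a j * q j)
      + (\<Sum>i\<in>{1..k}. ?a i * (?B - ?a i) * h i))"
    unfolding D_def n_def by (rule pair_sum[OF assms(1,2,4)]) (auto simp: gg_def h_def q_def n_def)
  have sumD2: "(\<Sum>p\<in>?S. (D p)^2) = n^2 * ((1 - ?B) * (\<Sum>j\<in>{1..k}. ?a j * (q j)^2)
      + (\<Sum>i\<in>{1..k}. ?a i * (?B - ?a i) * (h i)^2))"
    unfolding D_def n_def by (rule pair_sum[OF assms(1,2,4)]) (auto simp: gg_def h_def q_def n_def)
  define \<mu> where "\<mu> = (\<Sum>p\<in>?S. D p) / n^2"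
  have EG: "(\<integral>y. gamma V k y \<partial>M) = ?G + \<mu>"
  proof -
    have "(\<integral>y. gamma V k y \<partial>M) = (\<Sum>p\<in>?S. gamma V k (usd_step x p)) / n^2"
      unfolding M_def n_def by (rule E_sum[OF assms(1,2)])
    also have "\<dots> = (\<Sum>p\<in>?S. ?G + D p) / n^2" by (simp add: hZ)
    also have "\<dots> = ?G + \<mu>" unfolding \<mu>_def sum.distrib using cS n0 by (simp add: add_divide_distrib)
    finally show ?thesis .
  qed
  have a0: "?a i \<ge> 0" for i by (rule alpha_nonneg)
  have B1: "1 - ?B \<ge> 0"
  proof -
    have "(\<Sum>u\<in>V. (if x u = None then 1 else 0 :: real)) = n * ((1 - ?B) * 1 + (\<Sum>i\<in>{1..k}. ?a i * 0))"
      using group2[OF assms(1,2,4), of "\<lambda>w. if w = None then 1 else 0"] unfolding n_def by simp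
    moreover have "(\<Sum>u\<in>V. (if x u = None then 1 else 0 :: real)) \<ge> 0" by (rule sum_nonneg) simp
    ultimately show ?thesis using n0 by (simp add: zero_le_mult_iff)
  qed
  have aB: "?a i \<le> ?B" if "i \<in> {1..k}" for i
    unfolding beta_def using that a0 by (intro member_le_sum) auto
  have s1: "(\<Sum>j\<in>{1..k}. ?a j * q j) = 2 / n * ?G + ?B / n^2"
    unfolding q_def gamma_def beta_def
    by (simp add: sum.distrib sum_distrib_left sum_divide_distrib algebra_simps power2_eq_square)
  have s2: "(\<Sum>i\<in>{1..k}. ?a i * (?B - ?a i) * h i) = ?B^2 / n^2 - ?G / n^2 - 2 * ?B * ?G / n + 2 * ?C / n"
  proof -
    have "(\<Sum>i\<in>{1..k}. ?a i * (?B - ?a i) * h i) =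
       (\<Sum>i\<in>{1..k}. (?B / n^2) * ?a i - (1 / n^2) * (?a i)^2 - (2 * ?B / n) * (?a i)^2 + (2 / n) * (?a i)^3)"
      unfolding h_def by (rule sum.cong) (simp_all add: algebra_simps power2_eq_square power3_eq_cube)
    also have "\<dots> = (?B / n^2) * ?B - (1 / n^2) * ?G - (2 * ?B / n) * ?G + (2 / n) * ?C"
      unfolding gamma_def beta_def norm3_cubed_def
      by (simp add: sum.distrib sum_subtractf sum_distrib_left)
    finally show ?thesis by (simp add: power2_eq_square)
  qed
  have P1: "(\<integral>y. gamma V k y \<partial>M) =
           ?G + 2 / n * ((1 - 2 * ?B) * ?G + ?C) + (?B - ?G) / n^2"
  proof -
    have "\<mu> = (1 - ?B) * (2 / n * ?G + ?B / n^2) + (?B^2 / n^2 - ?G / n^2 - 2 * ?B * ?G / n + 2 * ?C / n)"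
      unfolding \<mu>_def sumD s1 s2 using n0 by simp
    also have "\<dots> = 2 / n * ((1 - 2 * ?B) * ?G + ?C) + (?B - ?G) / n^2"
      using n0 by (simp add: field_simps power2_eq_square)
    finally show ?thesis using EG by simp
  qed
  have Dsq: "(\<Sum>p\<in>?S. (D p)^2) / n^2 \<le> 9 * ?C / n^2"
  proof -
    have trm: "(1 - ?B) * (?a i * (q i)^2) + ?a i * (?B - ?a i) * (h i)^2 \<le> 9 * (?a i)^3 / n^2"
      if i: "i \<in> {1..k}" for i
    proof -
      let ?Z = "9 * (?a i)^3 / n^2"
      have Z0: "?Z \<ge> 0" using a0[of i] by simp
      have bnd: "?a i * (q i)^2 \<le> ?Z \<and> ?a i * (h i)^2 \<le> ?Z"
      proof (cases "?a i = 0")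
        case True then show ?thesis by simp
      next
        case False
        then have ai: "?a i \<ge> 1 / n" using alpha_gap[OF assms(1), of x i] unfolding n_def by auto
        have e: "1 / n^2 \<le> ?a i / n" using divide_right_mono[OF ai, of n] n0 by (simp add: power2_eq_square)
        have ab: "\<bar>q i\<bar> \<le> 3 * (?a i / n) \<and> \<bar>h i\<bar> \<le> 3 * (?a i / n)"
          using abs_aux[OF _ e] n0 unfolding q_def h_def by simp
        have "(q i)^2 \<le> (3 * (?a i / n))^2 \<and> (h i)^2 \<le> (3 * (?a i / n))^2"
          using ab by (metis abs_le_square_iff abs_of_nonneg a0 n0 divide_nonneg_pos mult_nonneg_nonneg
                zero_le_numeral less_imp_le)
        then have "?a i * (q i)^2 \<le> ?a i * (3 * (?a i / n))^2 \<and> ?a i * (h i)^2 \<le> ?a i * (3 * (?a i / n))^2"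
          using a0[of i] by (simp add: mult_left_mono)
        moreover have "?a i * (3 * (?a i / n))^2 = ?Z" by (simp add: power2_eq_square power3_eq_cube)
        ultimately show ?thesis by simp
      qed
      have "(1 - ?B) * (?a i * (q i)^2) + ?a i * (?B - ?a i) * (h i)^2
          = (1 - ?B) * (?a i * (q i)^2) + (?B - ?a i) * (?a i * (h i)^2)" by (simp add: algebra_simps)
      also have "\<dots> \<le> (1 - ?B) * ?Z + (?B - ?a i) * ?Z"
        using bnd B1 aB[OF i] by (intro add_mono mult_left_mono) auto
      also have "\<dots> = (1 - ?a i) * ?Z" by (simp only: distrib_right[symmetric]) simp
      also have "\<dots> \<le> ?Z" using mult_nonneg_nonneg[OF a0[of i] Z0] by (simp only: left_diff_distrib mult_1_left)
      finally show ?thesis .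
    qed
    have "(\<Sum>p\<in>?S. (D p)^2) / n^2 = (\<Sum>i\<in>{1..k}. (1 - ?B) * (?a i * (q i)^2) + ?a i * (?B - ?a i) * (h i)^2)"
      unfolding sumD2 using n0 by (simp add: sum.distrib sum_distrib_left)
    also have "\<dots> \<le> (\<Sum>i\<in>{1..k}. 9 * (?a i)^3 / n^2)" by (rule sum_mono) (rule trm)
    also have "\<dots> = 9 * ?C / n^2" unfolding norm3_cubed_def by (simp add: sum_divide_distrib sum_distrib_left)
    finally show ?thesis .
  qed
  have devsum: "(\<Sum>p\<in>?S. (D p - \<mu>)^2) = (\<Sum>p\<in>?S. (D p)^2) - n^2 * \<mu>^2"
    unfolding sq_dev[OF fS] cS using n0 unfolding \<mu>_def by (simp add: power2_eq_square)
  have devle: "(\<Sum>p\<in>?S. (D p - \<mu>)^2) \<le> n^2 * (9 * ?C / n^2)"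
  proof -
    have "(\<Sum>p\<in>?S. (D p - \<mu>)^2) \<le> (\<Sum>p\<in>?S. (D p)^2)" unfolding devsum by simp
    also have "\<dots> = n^2 * ((\<Sum>p\<in>?S. (D p)^2) / n^2)" using n0 by simp
    also have "\<dots> \<le> n^2 * (9 * ?C / n^2)" using Dsq n0 by (intro mult_left_mono) auto
    finally show ?thesis .
  qed
  have P2: "measure_pmf.variance (usd_next V x) (gamma V k) \<le> 9 * ?C / n^2"
  proof -
    have "measure_pmf.variance (usd_next V x) (gamma V k) =
        (\<Sum>p\<in>?S. (gamma V k (usd_step x p) - (\<integral>y. gamma V k y \<partial>M))^2) / n^2"
      unfolding M_def n_def by (rule E_sum[OF assms(1,2)])
    also have "\<dots> = (\<Sum>p\<in>?S. (D p - \<mu>)^2) / n^2" unfolding EG by (simp add: hZ)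
    also have "\<dots> \<le> 9 * ?C / n^2" using devle n0 by (simp add: divide_le_eq mult.commute)
    finally show ?thesis .
  qed
  let ?am = "alpha_max V k x"
  have am0: "?am \<ge> 0"
    using alpha_le_max[of 1 k V x] alpha_nonneg[of V x 1] assms(3) by force
  have Db: "\<bar>D p\<bar> \<le> 3 * ?am / n" if "p \<in> ?S" for p
    using gg_bound[OF assms(1,2,4), of "fst p" "snd p"] that assms(3) unfolding D_def n_def by auto
  have mub: "\<bar>\<mu>\<bar> \<le> 3 * ?am / n"
  proof -
    have "\<bar>\<Sum>p\<in>?S. D p\<bar> \<le> (\<Sum>p\<in>?S. \<bar>D p\<bar>)" by (rule sum_abs)
    also have "\<dots> \<le> real (card ?S) * (3 * ?am / n)" by (rule sum_bounded_above) (rule Db)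
    finally have "\<bar>\<Sum>p\<in>?S. D p\<bar> \<le> n^2 * (3 * ?am / n)" using cS by simp
    then have "\<bar>\<Sum>p\<in>?S. D p\<bar> / n^2 \<le> n^2 * (3 * ?am / n) / n^2"
      using n0 by (intro divide_right_mono) auto
    moreover have "\<bar>\<mu>\<bar> = \<bar>\<Sum>p\<in>?S. D p\<bar> / n^2" unfolding \<mu>_def by (simp add: abs_divide)
    moreover have "n^2 * (3 * ?am / n) / n^2 = 3 * ?am / n" using n0 by simp
    ultimately show ?thesis by simp
  qed
  have P3: "bernstein_cond M (\<lambda>y. gamma V k y - (\<integral>z. gamma V k z \<partial>M)) (8 * ?am / n) (9 * ?C / n^2)"
    unfolding bernstein_cond_def
  proof (intro allI impI)
    fix l :: real
    assume lc: "\<bar>l\<bar> * (8 * ?am / n) < 3"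
    define c where "c = \<bar>l\<bar> * (8 * ?am / n)"
    have c3: "c < 3" using lc unfolding c_def .
    have c0: "c \<ge> 0" unfolding c_def using am0 n0 by simp
    define K where "K = l^2 / 2 / (1 - c / 3)"
    have K0: "K \<ge> 0" unfolding K_def using c3 by simp
    have pt: "exp (l * (D p - \<mu>)) \<le> 1 + l * (D p - \<mu>) + K * (D p - \<mu>)^2" if p: "p \<in> ?S" for p
    proof -
      let ?y = "l * (D p - \<mu>)"
      have "\<bar>D p - \<mu>\<bar> \<le> 8 * ?am / n" using Db[OF p] mub am0 n0 by (simp add: abs_le_iff)
      then have yc: "\<bar>?y\<bar> \<le> c" unfolding c_def abs_mult by (rule mult_left_mono) simp
      then have y3: "\<bar>?y\<bar> < 3" using c3 by simp
      have "exp ?y \<le> 1 + ?y + ?y^2 / 2 / (1 - \<bar>?y\<bar> / 3)" by (rule exp_bern[OF y3])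
      also have "?y^2 / 2 / (1 - \<bar>?y\<bar> / 3) \<le> ?y^2 / 2 / (1 - c / 3)"
        using yc c3 by (intro divide_left_mono) (auto intro: mult_pos_pos)
      also have "?y^2 / 2 / (1 - c / 3) = K * (D p - \<mu>)^2" unfolding K_def by (simp add: power_mult_distrib)
      finally show ?thesis by simp
    qed
    have "(\<integral>y. exp (l * (gamma V k y - (\<integral>z. gamma V k z \<partial>M))) \<partial>M)
        = (\<Sum>p\<in>?S. exp (l * (gamma V k (usd_step x p) - (\<integral>z. gamma V k z \<partial>M)))) / n^2"
      unfolding n_def by (subst (1) M_def) (rule E_sum[OF assms(1,2)])
    also have "\<dots> = (\<Sum>p\<in>?S. exp (l * (D p - \<mu>))) / n^2" unfolding EG by (simp add: hZ)
    also have "\<dots> \<le> (\<Sum>p\<in>?S. 1 + l * (D p - \<mu>) + K * (D p - \<mu>)^2) / n^2"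
      using n0 by (intro divide_right_mono sum_mono pt) auto
    also have "(\<Sum>p\<in>?S. 1 + l * (D p - \<mu>) + K * (D p - \<mu>)^2)
        = n^2 + l * ((\<Sum>p\<in>?S. D p) - n^2 * \<mu>) + K * (\<Sum>p\<in>?S. (D p - \<mu>)^2)"
      using cS by (simp add: sum.distrib sum_distrib_left sum_subtractf algebra_simps)
    also have "(\<Sum>p\<in>?S. D p) - n^2 * \<mu> = 0" unfolding \<mu>_def using n0 by simp
    also have "(n^2 + l * 0 + K * (\<Sum>p\<in>?S. (D p - \<mu>)^2)) / n^2 \<le> (n^2 + K * (n^2 * (9 * ?C / n^2))) / n^2"
      using devle K0 n0 by (intro divide_right_mono) (auto intro: mult_left_mono)
    also have "\<dots> = 1 + K * (9 * ?C / n^2)" using n0 by (simp add: field_simps)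
    also have "\<dots> \<le> exp (K * (9 * ?C / n^2))" by (rule exp_ge_add_one_self)
    also have "K * (9 * ?C / n^2) = (l^2 * (9 * ?C / n^2) / 2) / (1 - \<bar>l\<bar> * (8 * ?am / n) / 3)"
      unfolding K_def c_def by simp
    finally show "(\<integral>y. exp (l * (gamma V k y - (\<integral>z. gamma V k z \<partial>M))) \<partial>M)
        \<le> exp ((l^2 * (9 * ?C / n^2) / 2) / (1 - \<bar>l\<bar> * (8 * ?am / n) / 3))" .
  qed
  show ?thesis using P1 P2 P3 by blast
qed


end
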